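(* Let $f,\rho\in L^1(SE(2))$ be supported in $\mathbb{D}_{1/4}$ with $\rho$ radial in translations, and let $\psi:=\widetilde{f}$. Then for every $\mathbf{k}\in\mathbb{Z}^3$, \[ \widehat{\psi\oslash\rho}\{\mathbf{k}\}=\widehat{\psi}\{\mathbf{k}\}\,\widehat{\rho}[\mathbf{k}]. \]
   Context: $SE(2)=\mathbb{R}^2\rtimes SO(2)$, group law $(\mathbf{x},\mathbf{R})\circ(\mathbf{x}',\mathbf{R}')=(\mathbf{x}+\mathbf{R}\mathbf{x}',\mathbf{R}\mathbf{R}')$, elements parametrized by $(x,y,\theta)$, Haar measure $\mathrm{d}\mathbf{g}=\frac{1}{2\pi}\mathrm{d}x\,\mathrm{d}y\,\mathrm{d}\theta$. $\mathbb{L}=\{(\boldsymbol{\ell},\mathbf{I}):\boldsymbol{\ell}\in\mathbb{Z}^2\}$, $\mathbb{X}=\mathbb{L}\backslash SE(2)$, $\mu$ the normalized invariant measure on $\mathbb{X}$ (with $\int_{\mathbb{X}}\widetilde{f}\,\mathrm{d}\mu=\int_{SE(2)}f$), where $\widetilde{f}(\mathbb{L}(\mathbf{x},\mathbf{R}))=\sum_{\boldsymbol{\ell}\in\mathbb{Z}^2}f(\boldsymbol{\ell}+\mathbf{x},\mathbf{R})$. For $\psi\in L^1(\mathbb{X},\mu)$ and $g\in L^1(SE(2))$, $(\psi\oslash g)(\mathbb{L}\mathbf{g})=\int_{SE(2)}\psi(\mathbb{L}\mathbf{h})g(\mathbf{h}^{-1}\circ\mathbf{g})\,\mathrm{d}\mathbf{h}$.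 $\mathbb{D}_a=\{(\mathbf{x},\mathbf{R}):\|\mathbf{x}\|_2\le a\}$. $\rho$ radial in translations: $\rho(\mathbf{x},\mathbf{R})=\rho(\mathbf{S}\mathbf{x},\mathbf{R})$ for all $\mathbf{x}$, $\mathbf{R},\mathbf{S}\in SO(2)$. With $\varphi_{\mathbf{k}}(\mathbb{L}(x,y,\theta))=e^{2\pi\mathrm{i}(k_1x+k_2y)}e^{\mathrm{i}k_3\theta}$, $\widehat{\psi}\{\mathbf{k}\}=\int_{\mathbb{X}}\psi\,\overline{\varphi_{\mathbf{k}}}\,\mathrm{d}\mu$. With $\phi_{\mathbf{k}}(x,y,\theta)=e^{2\pi\mathrm{i}(k_1x+k_2y)}e^{\mathrm{i}k_3\theta}$ and $\Omega=[-\tfrac12,\tfrac12)^2\times SO(2)$, for $\rho$ supported in $\Omega$, $\widehat{\rho}[\mathbf{k}]=\frac{1}{2\pi}\int_0^{2\pi}\int_{[-1/2,1/2)^2}\rho\,\overline{\phi_{\mathbf{k}}}\,\mathrm{d}x\,\mathrm{d}y\,\mathrm{d}\theta$. *)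

theory Defs
  imports "HOL-Analysis.Analysis"
begin

text \<open>Elements of SE(2) are represented by triples (x, y, theta) :: real * real * real;
  functions on SE(2) are functions on such triples that are 2pi-periodic in theta.
  Group law: (x,R) o (x',R') = (x + R x', R R').\<close>

type_synonym se2 = "real \<times> real \<times> real"

definition rot :: "real \<Rightarrow> real \<Rightarrow> real \<Rightarrow> real \<times> real" where
  "rot t x y = (cos t * x - sin t * y, sin t * x + cos t * y)"

definition se2_mult :: "se2 \<Rightarrow> se2 \<Rightarrow> se2" where
  "se2_mult g h = (case g of (x, y, t) \<Rightarrow> case h of (x', y', t') \<Rightarrow>
     (x + fst (rot t x' y'), y + snd (rot t x' y'), t + t'))"

definition se2_inv :: "se2 \<Rightarrow> se2" where
  "se2_inv g = (case g of (x, y, t) \<Rightarrow>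
     (- fst (rot (- t) x y), - snd (rot (- t) x y), - t))"

definition se2_fun :: "(se2 \<Rightarrow> 'a) \<Rightarrow> bool" where
  "se2_fun f \<longleftrightarrow> (\<forall>x y t. f (x, y, t + 2 * pi) = f (x, y, t))"

definition se2_integral :: "(se2 \<Rightarrow> complex) \<Rightarrow> complex" where
  "se2_integral f = complex_of_real (1 / (2 * pi)) *
     (LINT p : (UNIV \<times> UNIV \<times> {0..<2 * pi}) | lborel. f p)"

definition se2_L1 :: "(se2 \<Rightarrow> complex) \<Rightarrow> bool" where
  "se2_L1 f \<longleftrightarrow> se2_fun f \<and> set_integrable lborel (UNIV \<times> UNIV \<times> {0..<2 * pi}) f"

definition supported_in_disk :: "real \<Rightarrow> (se2 \<Rightarrow> complex) \<Rightarrow> bool" where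
  "supported_in_disk a f \<longleftrightarrow> (\<forall>x y t. f (x, y, t) \<noteq> 0 \<longrightarrow> sqrt (x\<^sup>2 + y\<^sup>2) \<le> a)"

definition radial_transl :: "(se2 \<Rightarrow> complex) \<Rightarrow> bool" where
  "radial_transl f \<longleftrightarrow>
     (\<forall>x y t s. f (fst (rot s x y), snd (rot s x y), t) = f (x, y, t))"

text \<open>Functions on X = L\SE(2) are represented as functions on SE(2)
  invariant under left translation by Z^2. Periodization:\<close>
definition periodize :: "(se2 \<Rightarrow> complex) \<Rightarrow> se2 \<Rightarrow> complex" where
  "periodize f p = (case p of (x, y, t) \<Rightarrow>
     (\<Sum>\<^sub>\<infinity>l \<in> (UNIV :: (int \<times> int) set).
        f (of_int (fst l) + x, of_int (snd l) + y, t)))"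

definition convX :: "(se2 \<Rightarrow> complex) \<Rightarrow> (se2 \<Rightarrow> complex) \<Rightarrow> se2 \<Rightarrow> complex" where
  "convX psi g p = se2_integral (\<lambda>h. psi h * g (se2_mult (se2_inv h) p))"

definition phi :: "int \<times> int \<times> int \<Rightarrow> se2 \<Rightarrow> complex" where
  "phi k p = (case k of (k1, k2, k3) \<Rightarrow> case p of (x, y, t) \<Rightarrow>
     exp (2 * pi * \<i> * complex_of_real (of_int k1 * x + of_int k2 * y))
     * exp (\<i> * complex_of_real (of_int k3 * t)))"

text \<open>Fourier coefficient on X w.r.t. the normalized invariant measure mu
  (fundamental domain [0,1)^2 x [0,2pi), density 1/(2pi)).\<close>
definition fourierX :: "(se2 \<Rightarrow> complex) \<Rightarrow> int \<times> int \<times> int \<Rightarrow> complex" where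
  "fourierX psi k = complex_of_real (1 / (2 * pi)) *
     (LINT p : ({0..<1} \<times> {0..<1} \<times> {0..<2 * pi}) | lborel. psi p * cnj (phi k p))"

definition fourierOmega :: "(se2 \<Rightarrow> complex) \<Rightarrow> int \<times> int \<times> int \<Rightarrow> complex" where
  "fourierOmega rho k = complex_of_real (1 / (2 * pi)) *
     (LINT p : ({-1/2..<1/2} \<times> {-1/2..<1/2} \<times> {0..<2 * pi}) | lborel. rho p * cnj (phi k p))"

end

theory Submission imports Defs begin

lemma translate_emeasure:
  fixes v :: "'a::euclidean_space"
  assumes "Y \<in> sets borel"
  shows "emeasure lborel ((\<lambda>u. u + v) -` Y) = emeasure lborel Y"
proof -
  have "emeasure (distr lborel borel ((+) v)) Y = emeasure lborel Y"
    by (simp add: lborel_distr_plus)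
  moreover have "(\<lambda>u. u + v) = (+) v" by (rule ext) (simp add: add.commute)
  ultimately show ?thesis using assms by (simp add: emeasure_distr)
qed

lemma shear2:
  fixes g :: "'a::euclidean_space \<Rightarrow> 'b::euclidean_space"
  assumes g[measurable]: "g \<in> borel_measurable borel"
  shows "distr lborel borel (\<lambda>(x,z). (x, z + g x)) = (lborel :: ('a \<times> 'b) measure)"
proof -
  have "(\<lambda>(x,z). (x, z + g x)) \<in> measurable (borel \<Otimes>\<^sub>M borel) (borel \<Otimes>\<^sub>M borel :: ('a\<times>'b) measure)"
    by measurable
  then have m[measurable]: "(\<lambda>(x,z). (x, z + g x)) \<in> borel_measurable (borel :: ('a\<times>'b) measure)"
    by (simp add: borel_prod)
  show ?thesis
  proof (rule measure_eqI)
    fix X :: "('a\<times>'b) set" assume X: "X \<in> sets (distr lborel borel (\<lambda>(x,z). (x, z + g x)))"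
    then have Xb: "X \<in> sets borel" by simp
    let ?T = "(\<lambda>(x,z). (x, z + g x))"
    have TX: "?T -` X \<in> sets (lborel \<Otimes>\<^sub>M lborel)"
      unfolding lborel_prod sets_lborel using measurable_sets_borel[OF m Xb] .
    have XX: "X \<in> sets (lborel \<Otimes>\<^sub>M lborel)" unfolding lborel_prod sets_lborel using Xb .
    have "emeasure (distr lborel borel ?T) X = emeasure lborel (?T -` X)"
      using Xb m by (simp add: emeasure_distr)
    also have "\<dots> = emeasure (lborel \<Otimes>\<^sub>M lborel) (?T -` X)" by (simp add: lborel_prod)
    also have "\<dots> = (\<integral>\<^sup>+x. emeasure lborel (Pair x -` (?T -` X)) \<partial>lborel)"
      by (rule lborel.emeasure_pair_measure_alt[OF TX])
    also have "\<dots> = (\<integral>\<^sup>+x. emeasure lborel (Pair x -` X) \<partial>lborel)"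
    proof (rule nn_integral_cong)
      fix x :: 'a
      have "Pair x -` (?T -` X) = (\<lambda>z. z + g x) -` (Pair x -` X)" by auto
      moreover have "Pair x -` X \<in> sets borel"
        using XX by (metis sets_Pair1 sets_lborel)
      ultimately show "emeasure lborel (Pair x -` (?T -` X)) = emeasure lborel (Pair x -` X)"
        by (simp add: translate_emeasure)
    qed
    also have "\<dots> = emeasure (lborel \<Otimes>\<^sub>M lborel) X"
      by (rule lborel.emeasure_pair_measure_alt[OF XX, symmetric])
    finally show "emeasure (distr lborel borel ?T) X = emeasure lborel X" by (simp add: lborel_prod)
  qed simp
qed

lemma shear1:
  fixes g :: "'b::euclidean_space \<Rightarrow> 'a::euclidean_space"
  assumes g[measurable]: "g \<in> borel_measurable borel"
  shows "distr lborel borel (\<lambda>(x,z). (x + g z, z)) = (lborel :: ('a \<times> 'b) measure)"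
proof -
  have "(\<lambda>(x,z). (x + g z, z)) \<in> measurable (borel \<Otimes>\<^sub>M borel) (borel \<Otimes>\<^sub>M borel :: ('a\<times>'b) measure)"
    by measurable
  then have m[measurable]: "(\<lambda>(x,z). (x + g z, z)) \<in> borel_measurable (borel :: ('a\<times>'b) measure)"
    by (simp add: borel_prod)
  show ?thesis
  proof (rule measure_eqI)
    fix X :: "('a\<times>'b) set" assume X: "X \<in> sets (distr lborel borel (\<lambda>(x,z). (x + g z, z)))"
    then have Xb: "X \<in> sets borel" by simp
    let ?T = "(\<lambda>(x,z). (x + g z, z))"
    have TX: "?T -` X \<in> sets (lborel \<Otimes>\<^sub>M lborel)"
      unfolding lborel_prod sets_lborel using measurable_sets_borel[OF m Xb] .
    have XX: "X \<in> sets (lborel \<Otimes>\<^sub>M lborel)" unfolding lborel_prod sets_lborel using Xb .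
    have "emeasure (distr lborel borel ?T) X = emeasure lborel (?T -` X)"
      using Xb m by (simp add: emeasure_distr)
    also have "\<dots> = emeasure (lborel \<Otimes>\<^sub>M lborel) (?T -` X)" by (simp add: lborel_prod)
    also have "\<dots> = (\<integral>\<^sup>+y. emeasure lborel ((\<lambda>x. (x, y)) -` (?T -` X)) \<partial>lborel)"
      by (rule lborel_pair.emeasure_pair_measure_alt2[OF TX])
    also have "\<dots> = (\<integral>\<^sup>+y. emeasure lborel ((\<lambda>x. (x, y)) -` X) \<partial>lborel)"
    proof (rule nn_integral_cong)
      fix y :: 'b
      have "(\<lambda>x. (x, y)) -` (?T -` X) = (\<lambda>x. x + g y) -` ((\<lambda>x. (x, y)) -` X)" by auto
      moreover have "(\<lambda>x. (x, y)) -` X \<in> sets borel"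
        using XX by (metis sets_Pair2 sets_lborel)
      ultimately show "emeasure lborel ((\<lambda>x. (x, y)) -` (?T -` X)) = emeasure lborel ((\<lambda>x. (x, y)) -` X)"
        by (simp add: translate_emeasure)
    qed
    also have "\<dots> = emeasure (lborel \<Otimes>\<^sub>M lborel) X"
      by (rule lborel_pair.emeasure_pair_measure_alt2[OF XX, symmetric])
    finally show "emeasure (distr lborel borel ?T) X = emeasure lborel X" by (simp add: lborel_prod)
  qed simp
qed

definition mp :: "(se2 \<Rightarrow> se2) \<Rightarrow> bool" where
  "mp T \<longleftrightarrow> T \<in> borel_measurable borel \<and> distr lborel borel T = lborel"

lemma mp_comp: "mp T1 \<Longrightarrow> mp T2 \<Longrightarrow> mp (T2 \<circ> T1)"
proof -
  assume a: "mp T1" "mp T2"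
  then have m1: "T1 \<in> measurable lborel borel" and m2: "T2 \<in> measurable borel borel"
    unfolding mp_def by (auto simp: measurable_lborel1)
  have "distr lborel borel (T2 \<circ> T1) = distr (distr lborel borel T1) borel T2"
    by (rule distr_distr[OF m2 m1, symmetric])
  also have "\<dots> = lborel" using a unfolding mp_def by simp
  moreover have "T2 \<circ> T1 \<in> borel_measurable borel"
    using a unfolding mp_def by (auto intro: measurable_comp)
  ultimately show ?thesis unfolding mp_def by simp
qed

lemma mp_trans: "mp (\<lambda>u. u + v)"
proof -
  have "(\<lambda>u. u + v) = (+) v" by (rule ext) (simp add: add.commute)
  then show ?thesis unfolding mp_def by (simp add: lborel_distr_plus)
qed

definition ShX :: "real \<Rightarrow> se2 \<Rightarrow> se2" where
  "ShX a = (\<lambda>(x,z). (x + a * fst z, z))"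
definition ShY :: "real \<Rightarrow> se2 \<Rightarrow> se2" where
  "ShY b = (\<lambda>(x,z). (x, z + (b * x, 0)))"

lemma mp_ShX: "mp (ShX a)"
proof -
  have m: "(\<lambda>z::real\<times>real. a * fst z) \<in> borel_measurable borel"
    by (intro borel_measurable_continuous_onI continuous_intros)
  have "continuous_on UNIV (\<lambda>p::se2. (fst p + a * fst (snd p), snd p))"
    by (intro continuous_intros)
  then have "(\<lambda>p::se2. (fst p + a * fst (snd p), snd p)) \<in> borel_measurable borel"
    by (rule borel_measurable_continuous_onI)
  moreover have "(\<lambda>(x,z). (x + a * fst z, z)) = (\<lambda>p::se2. (fst p + a * fst (snd p), snd p))" by auto
  ultimately show ?thesis unfolding mp_def ShX_def using shear1[OF m] by simp
qed

lemma mp_ShY: "mp (ShY b)"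
proof -
  have m: "(\<lambda>x::real. (b * x, 0::real)) \<in> borel_measurable borel" by measurable
  have "(\<lambda>(x,z). (x, z + (b * x, 0::real))) \<in> measurable (borel \<Otimes>\<^sub>M borel) (borel \<Otimes>\<^sub>M borel :: se2 measure)"
    by measurable
  then show ?thesis unfolding mp_def ShY_def using shear2[OF m] by (simp add: borel_prod)
qed

definition Rot :: "real \<Rightarrow> se2 \<Rightarrow> se2" where
  "Rot s p = (case p of (x, y, t) \<Rightarrow> (fst (rot s x y), snd (rot s x y), t))"

lemma Rot_shear:
  assumes "sin s \<noteq> 0"
  shows "Rot s = ShX ((cos s - 1) / sin s) \<circ> ShY (sin s) \<circ> ShX ((cos s - 1) / sin s)"
proof (rule ext, clarify)
  fix x y t :: real
  let ?a = "(cos s - 1) / sin s"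
  have e: "?a * (1 + cos s) = - sin s"
  proof -
    have "?a * (1 + cos s) = (cos s ^ 2 - 1) / sin s" by (simp add: field_simps power2_eq_square)
    also have "\<dots> = - (sin s ^ 2) / sin s" by (simp add: sin_squared_eq)
    finally show ?thesis using assms by (simp add: power2_eq_square)
  qed
  have e2: "1 + ?a * sin s = cos s" using assms by (simp add: field_simps)
  have "x + ?a * y + ?a * (y + sin s * (x + ?a * y)) = cos s * x - sin s * y"
  proof -
    have "x + ?a * y + ?a * (y + sin s * (x + ?a * y)) = (1 + ?a * sin s) * x + ?a * (1 + (1 + ?a * sin s)) * y"
      by (simp add: algebra_simps)
    also have "\<dots> = cos s * x + ?a * (1 + cos s) * y" by (simp only: e2)
    also have "\<dots> = cos s * x + (- sin s) * y" by (simp only: e)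
    finally show ?thesis by simp
  qed
  moreover have "y + sin s * (x + ?a * y) = sin s * x + cos s * y"
  proof -
    have "y + sin s * (x + ?a * y) = sin s * x + (1 + ?a * sin s) * y" by (simp add: algebra_simps)
    then show ?thesis by (simp only: e2)
  qed
  ultimately show "Rot s (x, y, t) = (ShX ?a \<circ> ShY (sin s) \<circ> ShX ?a) (x, y, t)"
    by (simp add: Rot_def rot_def ShX_def ShY_def)
qed

lemma Rot_add: "Rot (a + b) = Rot a \<circ> Rot b"
  by (rule ext) (clarsimp simp: Rot_def rot_def cos_add sin_add; simp add: algebra_simps)

lemma mp_Rot: "mp (Rot s)"
proof -
  have gen: "mp (Rot s)" if "sin s \<noteq> 0" for s
    unfolding Rot_shear[OF that] by (rule mp_comp[OF mp_ShX mp_comp[OF mp_ShY mp_ShX]])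
  show ?thesis
  proof (cases "sin s = 0")
    case True
    then have "cos s \<noteq> 0" using sin_zero_abs_cos_one by fastforce
    moreover have "sin (1::real) \<noteq> 0" using sin_gt_zero[of 1] pi_gt3 by simp
    ultimately have "sin (s - 1) \<noteq> 0" using True by (simp add: sin_diff)
    then have "mp (Rot (s - 1))" "mp (Rot 1)" using gen \<open>sin 1 \<noteq> 0\<close> by auto
    moreover have "Rot s = Rot (s - 1) \<circ> Rot 1" using Rot_add[of "s - 1" 1] by simp
    ultimately show ?thesis using mp_comp by metis
  qed (rule gen)
qed

definition muA :: "se2 set \<Rightarrow> se2 measure" where
  "muA X = density lborel (\<lambda>x. ennreal (indicator X x))"

lemma sets_muA[simp, measurable_cong]: "sets (muA X) = sets borel"
  by (simp add: muA_def)

lemma space_muA[simp]: "space (muA X) = UNIV"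
  by (simp add: muA_def)

lemma measurable_muA1[simp]: "measurable (muA X) M = measurable borel M"
  by (rule measurable_cong_sets) auto

lemma emeasure_muA:
  assumes "X \<in> sets borel" "Y \<in> sets borel"
  shows "emeasure (muA X) Y = emeasure lborel (X \<inter> Y)"
proof -
  have "emeasure (muA X) Y = (\<integral>\<^sup>+x. ennreal (indicator X x) * indicator Y x \<partial>lborel)"
    unfolding muA_def using assms by (subst emeasure_density) auto
  also have "\<dots> = (\<integral>\<^sup>+x. indicator (X \<inter> Y) x \<partial>lborel)"
    by (intro nn_integral_cong) (auto split: split_indicator)
  also have "\<dots> = emeasure lborel (X \<inter> Y)" using assms by simp
  finally show ?thesis .
qed

lemma muA_mp:
  assumes T: "mp T" and X: "X \<in> sets borel" and TX: "T -` X = X"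
  shows "distr (muA X) borel T = muA X"
proof (rule measure_eqI)
  fix Y assume "Y \<in> sets (distr (muA X) borel T)"
  then have Y: "Y \<in> sets borel" by simp
  have Tm: "T \<in> borel_measurable borel" and Td: "distr lborel borel T = lborel"
    using T unfolding mp_def by auto
  have "emeasure (distr (muA X) borel T) Y = emeasure (muA X) (T -` Y)"
    using Tm Y by (subst emeasure_distr) auto
  also have "\<dots> = emeasure lborel (X \<inter> T -` Y)"
    using Tm Y X by (intro emeasure_muA) (auto simp: measurable_sets_borel)
  also have "X \<inter> T -` Y = T -` (X \<inter> Y)" using TX by auto
  also have "emeasure lborel (T -` (X \<inter> Y)) = emeasure (distr lborel borel T) (X \<inter> Y)"
    using Tm X Y by (subst emeasure_distr) auto
  also have "\<dots> = emeasure lborel (X \<inter> Y)" using Td by simp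
  also have "\<dots> = emeasure (muA X) Y" using X Y by (simp add: emeasure_muA)
  finally show "emeasure (distr (muA X) borel T) Y = emeasure (muA X) Y" .
qed simp

lemma muA_wrap:
  assumes D1: "D1 \<in> sets borel" and D2: "D2 \<in> sets borel" and D12: "D1 \<inter> D2 = {}"
    and Tm: "T \<in> borel_measurable borel"
    and T1: "\<And>u. u \<in> D1 \<Longrightarrow> T u = u + v1" and T2: "\<And>u. u \<in> D2 \<Longrightarrow> T u = u + v2"
    and E1: "\<And>w. w \<in> E1 \<longleftrightarrow> w - v1 \<in> D1" and E2: "\<And>w. w \<in> E2 \<longleftrightarrow> w - v2 \<in> D2"
    and E12: "E1 \<inter> E2 = {}"
  shows "distr (muA (D1 \<union> D2)) borel T = muA (E1 \<union> E2)"
proof -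
  have E1eq: "E1 = (\<lambda>w. w + (- v1)) -` D1" using E1 by auto
  have E2eq: "E2 = (\<lambda>w. w + (- v2)) -` D2" using E2 by auto
  have cm: "(\<lambda>w::se2. w + c) \<in> borel_measurable borel" for c
    by (intro borel_measurable_continuous_onI continuous_intros)
  have E1b: "E1 \<in> sets borel" unfolding E1eq using D1 cm by (rule measurable_sets_borel[rotated])
  have E2b: "E2 \<in> sets borel" unfolding E2eq using D2 cm by (rule measurable_sets_borel[rotated])
  show ?thesis
  proof (rule measure_eqI)
    fix Y assume "Y \<in> sets (distr (muA (D1 \<union> D2)) borel T)"
    then have Y: "Y \<in> sets borel" by simp
    have TY: "T -` Y \<in> sets borel" using Tm Y by (simp add: measurable_sets_borel)
    have "emeasure (distr (muA (D1 \<union> D2)) borel T) Y = emeasure (muA (D1 \<union> D2)) (T -` Y)"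
      using Tm Y by (subst emeasure_distr) auto
    also have "\<dots> = emeasure lborel ((D1 \<union> D2) \<inter> T -` Y)"
      using D1 D2 TY by (intro emeasure_muA) auto
    also have "(D1 \<union> D2) \<inter> T -` Y = (D1 \<inter> T -` Y) \<union> (D2 \<inter> T -` Y)" by auto
    also have "emeasure lborel \<dots> = emeasure lborel (D1 \<inter> T -` Y) + emeasure lborel (D2 \<inter> T -` Y)"
      using D1 D2 TY D12 by (intro plus_emeasure[symmetric]) auto
    also have "D1 \<inter> T -` Y = (\<lambda>u. u + v1) -` (E1 \<inter> Y)"
    proof (rule set_eqI)
      fix u show "u \<in> D1 \<inter> T -` Y \<longleftrightarrow> u \<in> (\<lambda>u. u + v1) -` (E1 \<inter> Y)"
        using T1[of u] E1[of "u + v1"] by (cases "u \<in> D1") simp_all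
    qed
    also have "D2 \<inter> T -` Y = (\<lambda>u. u + v2) -` (E2 \<inter> Y)"
    proof (rule set_eqI)
      fix u show "u \<in> D2 \<inter> T -` Y \<longleftrightarrow> u \<in> (\<lambda>u. u + v2) -` (E2 \<inter> Y)"
        using T2[of u] E2[of "u + v2"] by (cases "u \<in> D2") simp_all
    qed
    also have "emeasure lborel ((\<lambda>u. u + v1) -` (E1 \<inter> Y)) = emeasure lborel (E1 \<inter> Y)"
      using E1b Y by (intro translate_emeasure) auto
    also have "emeasure lborel ((\<lambda>u. u + v2) -` (E2 \<inter> Y)) = emeasure lborel (E2 \<inter> Y)"
      using E2b Y by (intro translate_emeasure) auto
    also have "emeasure lborel (E1 \<inter> Y) + emeasure lborel (E2 \<inter> Y) = emeasure lborel ((E1 \<inter> Y) \<union> (E2 \<inter> Y))"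
      using E1b E2b Y E12 by (intro plus_emeasure) auto
    also have "(E1 \<inter> Y) \<union> (E2 \<inter> Y) = (E1 \<union> E2) \<inter> Y" by auto
    also have "emeasure lborel \<dots> = emeasure (muA (E1 \<union> E2)) Y"
      using E1b E2b Y by (intro emeasure_muA[symmetric]) auto
    finally show "emeasure (distr (muA (D1 \<union> D2)) borel T) Y = emeasure (muA (E1 \<union> E2)) Y" .
  qed simp
qed

lemma set_integral_muA:
  fixes g :: "se2 \<Rightarrow> 'b::{banach, second_countable_topology}"
  assumes X: "X \<in> sets borel" and g: "g \<in> borel_measurable borel"
  shows "(LINT u:X|lborel. g u) = integral\<^sup>L (muA X) g"
    and "set_integrable lborel X g \<longleftrightarrow> integrable (muA X) g"
proof -
  have i: "(\<lambda>x. indicator X x :: real) \<in> borel_measurable lborel" using X by simp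
  show "(LINT u:X|lborel. g u) = integral\<^sup>L (muA X) g"
    unfolding muA_def set_lebesgue_integral_def
    by (subst integral_density) (use g i in auto)
  show "set_integrable lborel X g \<longleftrightarrow> integrable (muA X) g"
    unfolding muA_def set_integrable_def
    by (subst integrable_density) (use g i in auto)
qed

lemma integral_distr_muA:
  fixes g :: "se2 \<Rightarrow> 'b::{banach, second_countable_topology}"
  assumes d: "distr (muA X) borel T = muA Y" and T: "T \<in> borel_measurable borel"
    and g: "g \<in> borel_measurable borel"
  shows "integral\<^sup>L (muA X) (\<lambda>u. g (T u)) = integral\<^sup>L (muA Y) g"
    and "integrable (muA X) (\<lambda>u. g (T u)) \<longleftrightarrow> integrable (muA Y) g"
proof -
  have T': "T \<in> measurable (muA X) borel" using T by simp
  show "integral\<^sup>L (muA X) (\<lambda>u. g (T u)) = integral\<^sup>L (muA Y) g"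
    using integral_distr[OF T' g] d by simp
  show "integrable (muA X) (\<lambda>u. g (T u)) \<longleftrightarrow> integrable (muA Y) g"
    using integrable_distr_eq[OF T' g] d by simp
qed

lemma Times3_borel:
  assumes [measurable]: "I \<in> sets (borel::real measure)" "J \<in> sets (borel::real measure)" "K \<in> sets (borel::real measure)"
  shows "(I \<times> J \<times> K :: se2 set) \<in> sets borel"
proof -
  have "(I \<times> J \<times> K :: se2 set) = {p \<in> space (borel \<Otimes>\<^sub>M (borel \<Otimes>\<^sub>M borel)). fst p \<in> I \<and> fst (snd p) \<in> J \<and> snd (snd p) \<in> K}"
    by (auto simp: space_pair_measure)
  also have "\<dots> \<in> sets (borel \<Otimes>\<^sub>M (borel \<Otimes>\<^sub>M borel))" by measurable
  finally show ?thesis by (simp only: borel_prod)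
qed

definition SA :: "se2 set" where "SA = UNIV \<times> UNIV \<times> {0..<2*pi}"
definition FF :: "se2 set" where "FF = {0..<1} \<times> {0..<1} \<times> {0..<2*pi}"
definition OM :: "se2 set" where "OM = {-1/2..<1/2} \<times> {-1/2..<1/2} \<times> {0..<2*pi}"

lemma SA_borel[measurable]: "SA \<in> sets borel" and FF_borel[measurable]: "FF \<in> sets borel"
  and OM_borel[measurable]: "OM \<in> sets borel"
  unfolding SA_def FF_def OM_def by (auto intro!: Times3_borel)

definition wrapt :: "real \<Rightarrow> real" where "wrapt t = t - 2 * pi * of_int (floor (t / (2 * pi)))"

lemma wrapt_eq:
  assumes "0 \<le> t - 2 * pi * of_int n" "t - 2 * pi * of_int n < 2 * pi"
  shows "wrapt t = t - 2 * pi * of_int n"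
proof -
  have "floor (t / (2 * pi)) = n"
  proof (rule floor_unique)
    show "of_int n \<le> t / (2 * pi)" using assms pi_gt_zero by (simp add: field_simps)
    show "t / (2 * pi) < of_int n + 1" using assms pi_gt_zero by (simp add: field_simps)
  qed
  then show ?thesis unfolding wrapt_def by simp
qed

lemma wrapt_range: "0 \<le> wrapt t" "wrapt t < 2 * pi"
proof -
  have a: "of_int (floor (t / (2 * pi))) \<le> t / (2 * pi)" by (rule of_int_floor_le)
  have b: "t / (2 * pi) < of_int (floor (t / (2 * pi))) + 1" by (rule real_of_int_floor_add_one_gt)
  have a': "2 * pi * of_int (floor (t / (2 * pi))) \<le> 2 * pi * (t / (2 * pi))"
    by (rule mult_left_mono[OF a]) simp
  have b': "2 * pi * (t / (2 * pi)) < 2 * pi * (of_int (floor (t / (2 * pi))) + 1)"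
    by (rule mult_strict_left_mono[OF b]) simp
  show "0 \<le> wrapt t" using a' unfolding wrapt_def by simp
  show "wrapt t < 2 * pi" using b' unfolding wrapt_def by (simp add: algebra_simps)
qed

lemma wrapt_int: "\<exists>n::int. wrapt t = t - 2 * pi * of_int n"
  unfolding wrapt_def by blast

lemma wrapt_measurable[measurable]: "wrapt \<in> borel_measurable borel"
  unfolding wrapt_def by measurable

lemma se2_fun_int:
  assumes "se2_fun f"
  shows "f (x, y, t + 2 * pi * of_int n) = f (x, y, t)"
proof (induction n arbitrary: t rule: int_induct[where k=0])
  case base then show ?case by simp
next
  case (step1 i)
  have "f (x, y, t + 2 * pi * of_int (i + 1)) = f (x, y, (t + 2 * pi * of_int i) + 2 * pi)"
    by (simp add: algebra_simps)
  also have "\<dots> = f (x, y, t + 2 * pi * of_int i)" using assms unfolding se2_fun_def by blast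
  finally show ?case using step1 by simp
next
  case (step2 i)
  have "f (x, y, t + 2 * pi * of_int (i - 1)) = f (x, y, (t + 2 * pi * of_int (i - 1)) + 2 * pi)"
    using assms unfolding se2_fun_def by metis
  also have "(t + 2 * pi * of_int (i - 1)) + 2 * pi = t + 2 * pi * of_int i"
    by (simp add: algebra_simps)
  finally show ?case using step2 by simp
qed

lemma se2_fun_wrapt:
  assumes "se2_fun f" shows "f (x, y, wrapt t) = f (x, y, t)"
proof -
  obtain n where "wrapt t = t - 2 * pi * of_int n" using wrapt_int by blast
  then show ?thesis using se2_fun_int[OF assms, of x y "t - 2 * pi * of_int n" n] by simp
qed

lemma se2_L1_measurable:
  assumes "se2_L1 f" shows "f \<in> borel_measurable borel"
proof -
  have p: "se2_fun f" and i: "set_integrable lborel SA f" using assms unfolding se2_L1_def SA_def by auto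
  have m: "(\<lambda>p. indicator SA p *\<^sub>R f p) \<in> borel_measurable borel"
    using borel_measurable_integrable[OF i[unfolded set_integrable_def]] by simp
  have W: "(\<lambda>p::se2. (fst p, fst (snd p), wrapt (snd (snd p)))) \<in> borel_measurable borel"
  proof -
    have "(\<lambda>p::se2. (fst p, fst (snd p), wrapt (snd (snd p)))) \<in> measurable (borel \<Otimes>\<^sub>M (borel \<Otimes>\<^sub>M borel)) (borel \<Otimes>\<^sub>M (borel \<Otimes>\<^sub>M borel))"
      by measurable
    then show ?thesis by (simp add: borel_prod)
  qed
  have "f = (\<lambda>p. indicator SA p *\<^sub>R f p) \<circ> (\<lambda>p::se2. (fst p, fst (snd p), wrapt (snd (snd p))))"
  proof (rule ext, clarify)
    fix x y t show "f (x, y, t) = ((\<lambda>p. indicator SA p *\<^sub>R f p) \<circ> (\<lambda>p::se2. (fst p, fst (snd p), wrapt (snd (snd p))))) (x, y, t)"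
      using wrapt_range[of t] se2_fun_wrapt[OF p, of x y t] by (simp add: SA_def indicator_def)
  qed
  then show ?thesis using measurable_comp[OF W m] by simp
qed

lemma se2_comp_measurable[measurable]:
  "(\<lambda>u::se2. fst u) \<in> borel_measurable borel"
  "(\<lambda>u::se2. fst (snd u)) \<in> borel_measurable borel"
  "(\<lambda>u::se2. snd (snd u)) \<in> borel_measurable borel"
  by (intro borel_measurable_continuous_onI continuous_intros)+

lemma W_distr:
  "distr (muA SA) borel (\<lambda>u::se2. (fst u, fst (snd u), wrapt (s + snd (snd u)))) = muA SA"
proof -
  define s' where "s' = wrapt s"
  obtain n where n: "s' = s - 2 * pi * of_int n" using wrapt_int unfolding s'_def by blast
  have s'r: "0 \<le> s'" "s' < 2 * pi" using wrapt_range unfolding s'_def by auto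
  define D1 :: "se2 set" where "D1 = {u \<in> space borel. u \<in> SA \<and> snd (snd u) + s' < 2 * pi}"
  define D2 :: "se2 set" where "D2 = {u \<in> space borel. u \<in> SA \<and> 2 * pi \<le> snd (snd u) + s'}"
  define E1 :: "se2 set" where "E1 = {u \<in> space borel. s' \<le> snd (snd u) \<and> snd (snd u) < 2 * pi}"
  define E2 :: "se2 set" where "E2 = {u \<in> space borel. 0 \<le> snd (snd u) \<and> snd (snd u) < s'}"
  have [measurable]: "D1 \<in> sets borel" "D2 \<in> sets borel" unfolding D1_def D2_def by measurable
  have W: "(\<lambda>u::se2. (fst u, fst (snd u), wrapt (s + snd (snd u)))) \<in> borel_measurable borel"
  proof -
    have "(\<lambda>u::se2. (fst u, fst (snd u), wrapt (s + snd (snd u)))) \<in> measurable (borel \<Otimes>\<^sub>M (borel \<Otimes>\<^sub>M borel)) (borel \<Otimes>\<^sub>M (borel \<Otimes>\<^sub>M borel))"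
      by measurable
    then show ?thesis by (simp only: borel_prod)
  qed
  have "distr (muA (D1 \<union> D2)) borel (\<lambda>u::se2. (fst u, fst (snd u), wrapt (s + snd (snd u)))) = muA (E1 \<union> E2)"
  proof (rule muA_wrap[where ?v1.0="(0,0,s')" and ?v2.0="(0,0,s' - 2 * pi)"])
    show "D1 \<inter> D2 = {}" unfolding D1_def D2_def by auto
    show "E1 \<inter> E2 = {}" unfolding E1_def E2_def by auto
    fix u :: se2
    obtain x y t where u: "u = (x, y, t)" by (cases u)
    show "u \<in> D1 \<Longrightarrow> (fst u, fst (snd u), wrapt (s + snd (snd u))) = u + (0, 0, s')"
    proof -
      assume "u \<in> D1"
      then have "0 \<le> t" "t + s' < 2 * pi" unfolding D1_def SA_def u by auto
      then have "wrapt (s + t) = s + t - 2 * pi * of_int n" using n s'r by (intro wrapt_eq) auto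
      then show ?thesis using n u by simp
    qed
    show "u \<in> D2 \<Longrightarrow> (fst u, fst (snd u), wrapt (s + snd (snd u))) = u + (0, 0, s' - 2 * pi)"
    proof -
      assume "u \<in> D2"
      then have "t < 2 * pi" "2 * pi \<le> t + s'" unfolding D2_def SA_def u by auto
      then have "wrapt (s + t) = s + t - 2 * pi * of_int (n + 1)" using n s'r
        by (intro wrapt_eq) (auto simp: algebra_simps)
      then show ?thesis using n u by (simp add: algebra_simps)
    qed
    show "u \<in> E1 \<longleftrightarrow> u - (0, 0, s') \<in> D1" unfolding E1_def D1_def SA_def u using s'r by auto
    show "u \<in> E2 \<longleftrightarrow> u - (0, 0, s' - 2 * pi) \<in> D2" unfolding E2_def D2_def SA_def u using s'r by auto
  qed (use W in auto)
  moreover have "D1 \<union> D2 = SA" unfolding D1_def D2_def by auto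
  moreover have "E1 \<union> E2 = SA" unfolding E1_def E2_def SA_def using s'r by auto
  ultimately show ?thesis by simp
qed

lemma left_inv:
  fixes g :: "se2 \<Rightarrow> 'b::{banach, second_countable_topology}"
  assumes g[measurable]: "g \<in> borel_measurable borel" and p: "se2_fun g"
  shows "integral\<^sup>L (muA SA) (\<lambda>u. g (se2_mult h u)) = integral\<^sup>L (muA SA) g"
    and "integrable (muA SA) (\<lambda>u. g (se2_mult h u)) \<longleftrightarrow> integrable (muA SA) g"
proof -
  obtain a b s where h: "h = (a, b, s)" by (cases h)
  define TR where "TR = (\<lambda>v. v + (a, b, 0)) \<circ> Rot s"
  have mpTR: "mp TR" unfolding TR_def by (intro mp_comp mp_Rot mp_trans)
  then have TRm: "TR \<in> borel_measurable borel" unfolding mp_def by simp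
  have TRA: "TR -` SA = SA" unfolding TR_def SA_def by (auto simp: Rot_def)
  have dTR: "distr (muA SA) borel TR = muA SA" by (rule muA_mp[OF mpTR SA_borel TRA])
  define W where "W = (\<lambda>u::se2. (fst u, fst (snd u), wrapt (s + snd (snd u))))"
  have Wm: "W \<in> borel_measurable borel"
  proof -
    have "W \<in> measurable (borel \<Otimes>\<^sub>M (borel \<Otimes>\<^sub>M borel)) (borel \<Otimes>\<^sub>M (borel \<Otimes>\<^sub>M borel))"
      unfolding W_def by measurable
    then show ?thesis by (simp only: borel_prod)
  qed
  have dW: "distr (muA SA) borel W = muA SA" unfolding W_def by (rule W_distr)
  have gTR: "(\<lambda>v. g (TR v)) \<in> borel_measurable borel" using measurable_comp[OF TRm g] by (simp add: comp_def)
  have eq: "g (se2_mult h u) = g (TR (W u))" for u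
  proof -
    obtain x y t where u: "u = (x, y, t)" by (cases u)
    have "g (TR (W u)) = g (a + fst (rot s x y), b + snd (rot s x y), wrapt (s + t))"
      unfolding TR_def W_def u by (simp add: Rot_def add.commute)
    also have "\<dots> = g (a + fst (rot s x y), b + snd (rot s x y), s + t)" by (rule se2_fun_wrapt[OF p])
    finally show ?thesis unfolding h u se2_mult_def by simp
  qed
  show "integral\<^sup>L (muA SA) (\<lambda>u. g (se2_mult h u)) = integral\<^sup>L (muA SA) g"
    unfolding eq integral_distr_muA(1)[OF dW Wm gTR] integral_distr_muA(1)[OF dTR TRm g] ..
  show "integrable (muA SA) (\<lambda>u. g (se2_mult h u)) \<longleftrightarrow> integrable (muA SA) g"
    unfolding eq integral_distr_muA(2)[OF dW Wm gTR] integral_distr_muA(2)[OF dTR TRm g] ..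
qed

definition cen1 :: "real \<Rightarrow> real" where "cen1 x = x - of_int (floor (x + 1/2))"

lemma cen1_eq:
  assumes "-1/2 \<le> x - of_int n" "x - of_int n < 1/2"
  shows "cen1 x = x - of_int n"
proof -
  have "floor (x + 1/2) = n" using assms by (intro floor_unique) auto
  then show ?thesis unfolding cen1_def by simp
qed

lemma cen1_range: "-1/2 \<le> cen1 x" "cen1 x < 1/2"
  unfolding cen1_def using of_int_floor_le[of "x + 1/2"] real_of_int_floor_add_one_gt[of "x + 1/2"]
  by linarith+

lemma cen1_int: "cen1 (x + of_int n) = cen1 x"
proof -
  have "x + of_int n + 1/2 = (x + 1/2) + of_int n" by simp
  then have "floor (x + of_int n + 1/2) = floor (x + 1/2) + n" by (metis floor_add_int)
  then show ?thesis unfolding cen1_def by simp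
qed

lemma cen1_measurable[measurable]: "cen1 \<in> borel_measurable borel"
  unfolding cen1_def by measurable

definition cen :: "se2 \<Rightarrow> se2" where "cen p = (cen1 (fst p), cen1 (fst (snd p)), snd (snd p))"

lemma cen_measurable[measurable]: "cen \<in> borel_measurable borel"
proof -
  have "(\<lambda>p::se2. (cen1 (fst p), cen1 (fst (snd p)), snd (snd p))) \<in> measurable (borel \<Otimes>\<^sub>M (borel \<Otimes>\<^sub>M borel)) (borel \<Otimes>\<^sub>M (borel \<Otimes>\<^sub>M borel))"
    by measurable
  then show ?thesis unfolding cen_def by (simp only: borel_prod)
qed

definition MID :: "se2 set" where "MID = {-1/2..<1/2} \<times> {0..<1} \<times> {0..<2*pi}"

lemma MID_borel[measurable]: "MID \<in> sets borel"
  unfolding MID_def by (auto intro!: Times3_borel)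

lemma CX_distr: "distr (muA FF) borel (\<lambda>p. (cen1 (fst p), snd p)) = muA MID"
proof -
  define D1 :: "se2 set" where "D1 = {u \<in> space borel. u \<in> FF \<and> fst u < 1/2}"
  define D2 :: "se2 set" where "D2 = {u \<in> space borel. u \<in> FF \<and> 1/2 \<le> fst u}"
  define E1 :: "se2 set" where "E1 = {u \<in> space borel. u \<in> MID \<and> 0 \<le> fst u}"
  define E2 :: "se2 set" where "E2 = {u \<in> space borel. u \<in> MID \<and> fst u < 0}"
  have [measurable]: "D1 \<in> sets borel" "D2 \<in> sets borel" unfolding D1_def D2_def by measurable
  have W: "(\<lambda>p::se2. (cen1 (fst p), snd p)) \<in> borel_measurable borel"
  proof -
    have "(\<lambda>p::se2. (cen1 (fst p), snd p)) \<in> measurable (borel \<Otimes>\<^sub>M (borel \<Otimes>\<^sub>M borel)) (borel \<Otimes>\<^sub>M (borel \<Otimes>\<^sub>M borel))"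
      by measurable
    then show ?thesis by (simp only: borel_prod)
  qed
  have "distr (muA (D1 \<union> D2)) borel (\<lambda>p::se2. (cen1 (fst p), snd p)) = muA (E1 \<union> E2)"
  proof (rule muA_wrap[where ?v1.0="(0,0,0)" and ?v2.0="(-1,0,0)"])
    show "D1 \<inter> D2 = {}" unfolding D1_def D2_def by auto
    show "E1 \<inter> E2 = {}" unfolding E1_def E2_def by auto
    fix u :: se2
    obtain x y t where u: "u = (x, y, t)" by (cases u)
    show "u \<in> D1 \<Longrightarrow> (cen1 (fst u), snd u) = u + (0, 0, 0)"
    proof -
      assume "u \<in> D1"
      then have "0 \<le> x" "x < 1/2" unfolding D1_def FF_def u by auto
      then have "cen1 x = x - of_int 0" by (intro cen1_eq) auto
      then show ?thesis using u by simp
    qed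
    show "u \<in> D2 \<Longrightarrow> (cen1 (fst u), snd u) = u + (-1, 0, 0)"
    proof -
      assume "u \<in> D2"
      then have "1/2 \<le> x" "x < 1" unfolding D2_def FF_def u by auto
      then have "cen1 x = x - of_int 1" by (intro cen1_eq) auto
      then show ?thesis using u by simp
    qed
    show "u \<in> E1 \<longleftrightarrow> u - (0, 0, 0) \<in> D1" unfolding E1_def D1_def FF_def MID_def u by auto
    show "u \<in> E2 \<longleftrightarrow> u - (-1, 0, 0) \<in> D2" unfolding E2_def D2_def FF_def MID_def u by auto
  qed (use W in auto)
  moreover have "D1 \<union> D2 = FF" unfolding D1_def D2_def by auto
  moreover have "E1 \<union> E2 = MID" unfolding E1_def E2_def by auto
  ultimately show ?thesis by simp
qed

lemma CY_distr: "distr (muA MID) borel (\<lambda>p. (fst p, cen1 (fst (snd p)), snd (snd p))) = muA OM"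
proof -
  define D1 :: "se2 set" where "D1 = {u \<in> space borel. u \<in> MID \<and> fst (snd u) < 1/2}"
  define D2 :: "se2 set" where "D2 = {u \<in> space borel. u \<in> MID \<and> 1/2 \<le> fst (snd u)}"
  define E1 :: "se2 set" where "E1 = {u \<in> space borel. u \<in> OM \<and> 0 \<le> fst (snd u)}"
  define E2 :: "se2 set" where "E2 = {u \<in> space borel. u \<in> OM \<and> fst (snd u) < 0}"
  have [measurable]: "D1 \<in> sets borel" "D2 \<in> sets borel" unfolding D1_def D2_def by measurable
  have W: "(\<lambda>p::se2. (fst p, cen1 (fst (snd p)), snd (snd p))) \<in> borel_measurable borel"
  proof -
    have "(\<lambda>p::se2. (fst p, cen1 (fst (snd p)), snd (snd p))) \<in> measurable (borel \<Otimes>\<^sub>M (borel \<Otimes>\<^sub>M borel)) (borel \<Otimes>\<^sub>M (borel \<Otimes>\<^sub>M borel))"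
      by measurable
    then show ?thesis by (simp only: borel_prod)
  qed
  have "distr (muA (D1 \<union> D2)) borel (\<lambda>p::se2. (fst p, cen1 (fst (snd p)), snd (snd p))) = muA (E1 \<union> E2)"
  proof (rule muA_wrap[where ?v1.0="(0,0,0)" and ?v2.0="(0,-1,0)"])
    show "D1 \<inter> D2 = {}" unfolding D1_def D2_def by auto
    show "E1 \<inter> E2 = {}" unfolding E1_def E2_def by auto
    fix u :: se2
    obtain x y t where u: "u = (x, y, t)" by (cases u)
    show "u \<in> D1 \<Longrightarrow> (fst u, cen1 (fst (snd u)), snd (snd u)) = u + (0, 0, 0)"
    proof -
      assume "u \<in> D1"
      then have "0 \<le> y" "y < 1/2" unfolding D1_def MID_def u by auto
      then have "cen1 y = y - of_int 0" by (intro cen1_eq) auto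
      then show ?thesis using u by simp
    qed
    show "u \<in> D2 \<Longrightarrow> (fst u, cen1 (fst (snd u)), snd (snd u)) = u + (0, -1, 0)"
    proof -
      assume "u \<in> D2"
      then have "1/2 \<le> y" "y < 1" unfolding D2_def MID_def u by auto
      then have "cen1 y = y - of_int 1" by (intro cen1_eq) auto
      then show ?thesis using u by simp
    qed
    show "u \<in> E1 \<longleftrightarrow> u - (0, 0, 0) \<in> D1" unfolding E1_def D1_def OM_def MID_def u by auto
    show "u \<in> E2 \<longleftrightarrow> u - (0, -1, 0) \<in> D2" unfolding E2_def D2_def OM_def MID_def u by auto
  qed (use W in auto)
  moreover have "D1 \<union> D2 = MID" unfolding D1_def D2_def by auto
  moreover have "E1 \<union> E2 = OM" unfolding E1_def E2_def by auto
  ultimately show ?thesis by simp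
qed

lemma unfold_cen:
  fixes H :: "se2 \<Rightarrow> complex"
  assumes H[measurable]: "H \<in> borel_measurable borel"
  shows "integral\<^sup>L (muA FF) (\<lambda>p. H (cen p)) = integral\<^sup>L (muA OM) H"
proof -
  define CX where "CX = (\<lambda>p::se2. (cen1 (fst p), snd p))"
  define CY where "CY = (\<lambda>p::se2. (fst p, cen1 (fst (snd p)), snd (snd p)))"
  have CXm: "CX \<in> borel_measurable borel"
  proof -
    have "CX \<in> measurable (borel \<Otimes>\<^sub>M (borel \<Otimes>\<^sub>M borel)) (borel \<Otimes>\<^sub>M (borel \<Otimes>\<^sub>M borel))"
      unfolding CX_def by measurable
    then show ?thesis by (simp only: borel_prod)
  qed
  have CYm: "CY \<in> borel_measurable borel"
  proof -
    have "CY \<in> measurable (borel \<Otimes>\<^sub>M (borel \<Otimes>\<^sub>M borel)) (borel \<Otimes>\<^sub>M (borel \<Otimes>\<^sub>M borel))"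
      unfolding CY_def by measurable
    then show ?thesis by (simp only: borel_prod)
  qed
  have HCY: "(\<lambda>v. H (CY v)) \<in> borel_measurable borel" using measurable_comp[OF CYm H] by (simp add: comp_def)
  have "cen p = CY (CX p)" for p unfolding cen_def CX_def CY_def by simp
  then have "integral\<^sup>L (muA FF) (\<lambda>p. H (cen p)) = integral\<^sup>L (muA FF) (\<lambda>p. H (CY (CX p)))" by simp
  also have "\<dots> = integral\<^sup>L (muA MID) (\<lambda>v. H (CY v))"
    by (rule integral_distr_muA(1)[OF CX_distr[folded CX_def] CXm HCY])
  also have "\<dots> = integral\<^sup>L (muA OM) H"
    by (rule integral_distr_muA(1)[OF CY_distr[folded CY_def] CYm H])
  finally show ?thesis .
qed

lemma abs_le_sqrt2: "\<bar>x\<bar> \<le> sqrt (x\<^sup>2 + y\<^sup>2)" "\<bar>y\<bar> \<le> sqrt (x\<^sup>2 + y\<^sup>2)"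
proof -
  have "sqrt (x\<^sup>2) \<le> sqrt (x\<^sup>2 + y\<^sup>2)" "sqrt (y\<^sup>2) \<le> sqrt (x\<^sup>2 + y\<^sup>2)"
    by (intro real_sqrt_le_mono; simp)+
  then show "\<bar>x\<bar> \<le> sqrt (x\<^sup>2 + y\<^sup>2)" "\<bar>y\<bar> \<le> sqrt (x\<^sup>2 + y\<^sup>2)"
    by (simp_all only: real_sqrt_abs)
qed

lemma supp_coord:
  assumes "supported_in_disk a f" "f (x, y, t) \<noteq> 0"
  shows "\<bar>x\<bar> \<le> a" "\<bar>y\<bar> \<le> a"
proof -
  have "sqrt (x\<^sup>2 + y\<^sup>2) \<le> a" using assms unfolding supported_in_disk_def by blast
  then show "\<bar>x\<bar> \<le> a" using abs_le_sqrt2(1)[of x y] by linarith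
  from \<open>sqrt (x\<^sup>2 + y\<^sup>2) \<le> a\<close> show "\<bar>y\<bar> \<le> a" using abs_le_sqrt2(2)[where x=x and y=y] by linarith
qed

lemma periodize_cen:
  assumes "supported_in_disk (1/4) f"
  shows "periodize f p = f (cen p)"
proof -
  obtain x y t where p: "p = (x, y, t)" by (cases p)
  define l0 where "l0 = (- floor (x + 1/2), - floor (y + 1/2))"
  have "(\<Sum>\<^sub>\<infinity>l \<in> (UNIV :: (int \<times> int) set). f (of_int (fst l) + x, of_int (snd l) + y, t))
      = (\<Sum>\<^sub>\<infinity>l \<in> {l0}. f (of_int (fst l) + x, of_int (snd l) + y, t))"
  proof (rule infsum_cong_neutral)
    fix l :: "int \<times> int" assume l: "l \<in> UNIV - {l0}"
    show "f (of_int (fst l) + x, of_int (snd l) + y, t) = 0"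
    proof (rule ccontr)
      assume nz: "f (of_int (fst l) + x, of_int (snd l) + y, t) \<noteq> 0"
      have a: "\<bar>of_int (fst l) + x\<bar> \<le> 1/4" "\<bar>of_int (snd l) + y\<bar> \<le> 1/4"
        using supp_coord[OF assms nz] by auto
      then have b: "-1/4 \<le> of_int (fst l) + x" "of_int (fst l) + x \<le> 1/4"
        "-1/4 \<le> of_int (snd l) + y" "of_int (snd l) + y \<le> 1/4" using a unfolding abs_le_iff by linarith+
      have "cen1 x = x - of_int (- fst l)" using b by (intro cen1_eq) auto
      then have "fst l = - floor (x + 1/2)" unfolding cen1_def by simp
      moreover have "cen1 y = y - of_int (- snd l)" using b by (intro cen1_eq) auto
      then have "snd l = - floor (y + 1/2)" unfolding cen1_def by simp
      ultimately have "l = l0" unfolding l0_def by (simp add: prod_eq_iff)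
      then show False using l by simp
    qed
  qed auto
  also have "\<dots> = f (cen p)" unfolding l0_def p cen_def cen1_def by (simp add: algebra_simps)
  finally show ?thesis unfolding periodize_def p by simp
qed

definition Qm :: "se2 \<Rightarrow> se2 \<Rightarrow> se2" where "Qm h p = se2_mult (se2_inv h) p"

lemma Qm_eq: "Qm h p = (cos (snd (snd h)) * (fst p - fst h) + sin (snd (snd h)) * (fst (snd p) - fst (snd h)),
   - sin (snd (snd h)) * (fst p - fst h) + cos (snd (snd h)) * (fst (snd p) - fst (snd h)),
   snd (snd p) - snd (snd h))"
  unfolding Qm_def se2_mult_def se2_inv_def rot_def
  by (cases h; cases p) (simp add: algebra_simps)

lemma Qm_cont: "continuous_on UNIV (\<lambda>z::se2\<times>se2. Qm (fst z) (snd z))"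
  unfolding Qm_eq by (intro continuous_intros)

lemma Qm_measurable: "(\<lambda>z::se2\<times>se2. Qm (fst z) (snd z)) \<in> borel_measurable borel"
  by (rule borel_measurable_continuous_onI[OF Qm_cont])

lemma Qm_mult: "Qm h (se2_mult h u) = u"
proof -
  obtain a b s where h: "h = (a, b, s)" by (cases h)
  obtain x y t where u: "u = (x, y, t)" by (cases u)
  have c: "cos s * cos s = 1 - sin s * sin s" using sin_cos_squared_add3[of s] by linarith
  show ?thesis unfolding Qm_eq h u se2_mult_def rot_def by (simp add: algebra_simps c)
qed

lemma rot_norm: "(fst (rot s x y))\<^sup>2 + (snd (rot s x y))\<^sup>2 = x\<^sup>2 + y\<^sup>2"
proof -
  have c: "cos s * cos s = 1 - sin s * sin s" using sin_cos_squared_add3[of s] by linarith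
  show ?thesis unfolding rot_def by (simp add: algebra_simps power2_eq_square c)
qed

lemma Qm_norm: "(fst (Qm h p))\<^sup>2 + (fst (snd (Qm h p)))\<^sup>2 = (fst p - fst h)\<^sup>2 + (fst (snd p) - fst (snd h))\<^sup>2"
proof -
  define s where "s = snd (snd h)"
  define X where "X = fst p - fst h"
  define Y where "Y = fst (snd p) - fst (snd h)"
  have c: "cos s * cos s = 1 - sin s * sin s" using sin_cos_squared_add3[of s] by linarith
  have "(fst (Qm h p))\<^sup>2 + (fst (snd (Qm h p)))\<^sup>2 = X\<^sup>2 + Y\<^sup>2"
    unfolding Qm_eq s_def[symmetric] X_def[symmetric] Y_def[symmetric] by (simp add: algebra_simps power2_eq_square c)
  then show ?thesis unfolding X_def Y_def .
qed

definition phase :: "int \<times> int \<times> int \<Rightarrow> se2 \<Rightarrow> real" where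
  "phase k p = 2 * pi * (of_int (fst k) * fst p + of_int (fst (snd k)) * fst (snd p)) + of_int (snd (snd k)) * snd (snd p)"

lemma phi_cis: "phi k p = cis (phase k p)"
proof -
  obtain k1 k2 k3 where k: "k = (k1, k2, k3)" by (cases k)
  obtain x y t where p: "p = (x, y, t)" by (cases p)
  have "phi k p = cis (2 * pi * (of_int k1 * x + of_int k2 * y)) * cis (of_int k3 * t)"
    unfolding phi_def k p cis_conv_exp by (simp add: algebra_simps)
  also have "\<dots> = cis (phase k p)" unfolding cis_mult phase_def k p by simp
  finally show ?thesis .
qed

lemma cnj_phi: "cnj (phi k p) = cis (- phase k p)"
  by (simp add: phi_cis cis_cnj)

lemma cis_int: "cis (a + 2 * pi * of_int n) = cis a"
proof -
  have "cis (a + 2 * pi * of_int n) = cis a * cis (2 * pi * of_int n)" by (rule cis_mult[symmetric])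
  also have "cis (2 * pi * of_int n) = 1" by (rule cis_multiple_2pi) simp
  finally show ?thesis by simp
qed

lemma cnj_phi_periodic: "cnj (phi k (x, y, t + 2 * pi)) = cnj (phi k (x, y, t))"
proof -
  have "- phase k (x, y, t + 2 * pi) = - phase k (x, y, t) + 2 * pi * of_int (- snd (snd k))"
    unfolding phase_def by (simp add: algebra_simps)
  then show ?thesis unfolding cnj_phi by (simp only: cis_int)
qed

lemma cnj_phi_cen: "cnj (phi k (cen p)) = cnj (phi k p)"
proof -
  obtain x y t where p: "p = (x, y, t)" by (cases p)
  have "- phase k (cen p) = - phase k p + 2 * pi * of_int (fst k * floor (x + 1/2) + fst (snd k) * floor (y + 1/2))"
    unfolding phase_def cen_def cen1_def p by (simp add: algebra_simps)
  then show ?thesis unfolding cnj_phi by (simp only: cis_int)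
qed

lemma cnj_phi_mult: "cnj (phi k (se2_mult h u)) = cnj (phi k h) * cnj (phi k (Rot (snd (snd h)) u))"
proof -
  obtain a b s where h: "h = (a, b, s)" by (cases h)
  obtain x y t where u: "u = (x, y, t)" by (cases u)
  have "- phase k (se2_mult h u) = - phase k h + - phase k (Rot s u)"
    unfolding phase_def h u se2_mult_def Rot_def by (simp add: algebra_simps)
  then show ?thesis unfolding cnj_phi h by (simp add: cis_mult)
qed

lemma norm_cnj_phi[simp]: "norm (cnj (phi k p)) = 1"
  by (simp add: cnj_phi)

lemma norm_phi[simp]: "norm (phi k p) = 1"
  by (simp add: phi_cis)

lemma cnj_phi_cont: "continuous_on UNIV (\<lambda>p. cnj (phi k p))"
  unfolding cnj_phi phase_def cis_conv_exp by (intro continuous_intros)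

lemma cnj_phi_measurable[measurable]: "(\<lambda>p. cnj (phi k p)) \<in> borel_measurable borel"
  by (rule borel_measurable_continuous_onI[OF cnj_phi_cont])

lemma AE_fst_ne: "AE z in (lborel::('a::euclidean_space \<times> 'b::euclidean_space) measure). fst z \<noteq> c"
proof -
  have "AE z in (lborel \<Otimes>\<^sub>M lborel::('a \<times> 'b) measure). fst z \<noteq> c"
  proof (rule lborel_pair.AE_pair_measure)
    show "{x \<in> space (lborel \<Otimes>\<^sub>M lborel). fst x \<noteq> c} \<in> sets (lborel \<Otimes>\<^sub>M (lborel::'b measure))"
      by measurable
    show "AE x in lborel. AE y in (lborel::'b measure). fst (x, y) \<noteq> c"
      using AE_lborel_singleton[of c] by eventually_elim simp
  qed
  then show ?thesis by (simp only: lborel_prod)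
qed

lemma AE_snd_lborel:
  assumes ae: "AE y in (lborel::'b::euclidean_space measure). P y" and P: "{y \<in> space borel. P y} \<in> sets borel"
  shows "AE z in (lborel::('a::euclidean_space \<times> 'b) measure). P (snd z)"
proof -
  have "AE z in (lborel \<Otimes>\<^sub>M lborel::('a \<times> 'b) measure). P (snd z)"
  proof (rule lborel_pair.AE_pair_measure)
    have "{x \<in> space (lborel \<Otimes>\<^sub>M lborel). P (snd x)} = snd -` {y \<in> space borel. P y} \<inter> space (lborel \<Otimes>\<^sub>M (lborel::'b measure))"
      by (auto simp: space_pair_measure)
    also have "\<dots> \<in> sets (lborel \<Otimes>\<^sub>M (lborel::'b measure))"
      using P by (intro measurable_sets[OF measurable_snd]) simp
    finally show "{x \<in> space (lborel \<Otimes>\<^sub>M lborel). P (snd x)} \<in> sets (lborel \<Otimes>\<^sub>M (lborel::'b measure))" .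
    show "AE x in (lborel::'a measure). AE y in (lborel::'b measure). P (snd (x, y))"
    proof (rule AE_I2)
      fix x show "AE y in (lborel::'b measure). P (snd (x, y))" using ae by simp
    qed
  qed
  then show ?thesis by (simp only: lborel_prod)
qed

lemma AE_coords_lborel: "AE h in (lborel::se2 measure). fst h \<noteq> c \<and> fst (snd h) \<noteq> d"
proof -
  have 1: "AE h in (lborel::se2 measure). fst h \<noteq> c" by (rule AE_fst_ne)
  have m[measurable]: "(\<lambda>y::real\<times>real. fst y) \<in> borel_measurable borel"
    by (intro borel_measurable_continuous_onI continuous_intros)
  have 2: "AE h in (lborel::se2 measure). fst (snd h) \<noteq> d"
    by (rule AE_snd_lborel[OF AE_fst_ne]) measurable
  from 1 2 show ?thesis by eventually_elim simp
qed

lemma AE_coords_muA: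
  assumes X[measurable]: "X \<in> sets borel"
  shows "AE h in muA X. fst h \<noteq> c \<and> fst (snd h) \<noteq> d"
proof -
  have "(\<lambda>x. ennreal (indicator X x)) \<in> borel_measurable lborel" by simp
  then show ?thesis unfolding muA_def
    by (subst AE_density) (auto intro: AE_mp[OF AE_coords_lborel])
qed

lemma cen_bad:
  assumes f: "supported_in_disk (1/4) f" and r: "supported_in_disk (1/4) rho"
    and q1: "-1/2 \<le> fst q" "fst q < 1/2" and q2: "-1/2 \<le> fst (snd q)" "fst (snd q) < 1/2"
    and h: "fst h \<noteq> -3/4" "fst (snd h) \<noteq> -3/4"
  shows "f (cen h) * rho (Qm h q) = f h * rho (Qm h q)"
proof (cases "rho (Qm h q) = 0")
  case False
  obtain a b s where hh: "h = (a, b, s)" by (cases h)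
  obtain x y t where qq: "q = (x, y, t)" by (cases q)
  obtain X Y T where QQ: "Qm h q = (X, Y, T)" by (cases "Qm h q")
  have "sqrt (X\<^sup>2 + Y\<^sup>2) \<le> 1/4" using r False QQ unfolding supported_in_disk_def by auto
  moreover have "X\<^sup>2 + Y\<^sup>2 = (x - a)\<^sup>2 + (y - b)\<^sup>2" using Qm_norm[of h q] QQ hh qq by simp
  ultimately have d: "sqrt ((x - a)\<^sup>2 + (y - b)\<^sup>2) \<le> 1/4" by simp
  then have dx: "\<bar>x - a\<bar> \<le> 1/4" and dy: "\<bar>y - b\<bar> \<le> 1/4"
    using abs_le_sqrt2(1)[where x="x - a" and y="y - b"] abs_le_sqrt2(2)[where x="x - a" and y="y - b"] by linarith+
  have qx: "-1/2 \<le> x" "x < 1/2" and qy: "-1/2 \<le> y" "y < 1/2" using q1 q2 qq by auto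
  have ha: "a \<noteq> -3/4" and hb: "b \<noteq> -3/4" using h hh by auto
  show ?thesis
  proof (cases "-1/2 \<le> a \<and> a < 1/2 \<and> -1/2 \<le> b \<and> b < 1/2")
    case True
    then have "cen1 a = a - of_int 0" "cen1 b = b - of_int 0" by (intro cen1_eq; simp)+
    then have "cen h = h" unfolding cen_def hh by simp
    then show ?thesis by simp
  next
    case nb: False
    have fh: "f h = 0"
    proof (rule ccontr)
      assume "f h \<noteq> 0"
      then have "\<bar>a\<bar> \<le> 1/4" "\<bar>b\<bar> \<le> 1/4" using supp_coord[OF f] hh by auto
      then show False using nb by auto
    qed
    have fc: "f (cen h) = 0"
    proof (rule ccontr)
      assume nz: "f (cen h) \<noteq> 0"
      have ca: "\<bar>cen1 a\<bar> \<le> 1/4" and cb: "\<bar>cen1 b\<bar> \<le> 1/4"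
        using supp_coord[OF f, of "cen1 a" "cen1 b" s] nz unfolding cen_def hh by auto
      have "-3/4 \<le> a" "a < 3/4" using dx[unfolded abs_le_iff] qx by linarith+
      then have ra: "-3/4 < a" "a < 3/4" using ha le_neq_trans by auto
      have "-3/4 \<le> b" "b < 3/4" using dy[unfolded abs_le_iff] qy by linarith+
      then have rb: "-3/4 < b" "b < 3/4" using hb le_neq_trans by auto
      have A: "-1/2 \<le> a \<and> a < 1/2"
      proof (rule ccontr)
        assume "\<not> (-1/2 \<le> a \<and> a < 1/2)"
        then consider "1/2 \<le> a" | "a < -1/2" by linarith
        then show False
        proof cases
          case 1
          then have "cen1 a = a - of_int 1" using ra by (intro cen1_eq) auto
          then show False using ca ra 1 by (auto simp: abs_le_iff)
        next
          case 2
          then have "cen1 a = a - of_int (-1)" using ra by (intro cen1_eq) auto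
          then show False using ca ra 2 by (auto simp: abs_le_iff)
        qed
      qed
      have B: "-1/2 \<le> b \<and> b < 1/2"
      proof (rule ccontr)
        assume "\<not> (-1/2 \<le> b \<and> b < 1/2)"
        then consider "1/2 \<le> b" | "b < -1/2" by linarith
        then show False
        proof cases
          case 1
          then have "cen1 b = b - of_int 1" using rb by (intro cen1_eq) auto
          then show False using cb rb 1 by (auto simp: abs_le_iff)
        next
          case 2
          then have "cen1 b = b - of_int (-1)" using rb by (intro cen1_eq) auto
          then show False using cb rb 2 by (auto simp: abs_le_iff)
        qed
      qed
      show False using A B nb by auto
    qed
    show ?thesis using fh fc by simp
  qed
qed simp

lemma conv_supp:
  assumes f: "supported_in_disk (1/4) f" and r: "supported_in_disk (1/4) rho"
    and q: "q \<in> SA" "q \<notin> OM" "fst q \<noteq> 1/2" "fst (snd q) \<noteq> 1/2"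
  shows "f h * rho (Qm h q) = 0"
proof (rule ccontr)
  assume nz: "f h * rho (Qm h q) \<noteq> 0"
  obtain a b s where hh: "h = (a, b, s)" by (cases h)
  obtain x y t where qq: "q = (x, y, t)" by (cases q)
  obtain X Y T where QQ: "Qm h q = (X, Y, T)" by (cases "Qm h q")
  have "sqrt (X\<^sup>2 + Y\<^sup>2) \<le> 1/4" using r nz QQ unfolding supported_in_disk_def by auto
  moreover have "X\<^sup>2 + Y\<^sup>2 = (x - a)\<^sup>2 + (y - b)\<^sup>2" using Qm_norm[of h q] QQ hh qq by simp
  ultimately have d: "sqrt ((x - a)\<^sup>2 + (y - b)\<^sup>2) \<le> 1/4" by simp
  then have dx: "\<bar>x - a\<bar> \<le> 1/4" and dy: "\<bar>y - b\<bar> \<le> 1/4"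
    using abs_le_sqrt2(1)[where x="x - a" and y="y - b"] abs_le_sqrt2(2)[where x="x - a" and y="y - b"] by linarith+
  have "\<bar>a\<bar> \<le> 1/4" "\<bar>b\<bar> \<le> 1/4" using supp_coord[OF f, of a b s] nz hh by auto
  then have "-1/2 \<le> x" "x \<le> 1/2" "-1/2 \<le> y" "y \<le> 1/2" using dx dy
    unfolding abs_le_iff by linarith+
  moreover have "x \<noteq> 1/2" "y \<noteq> 1/2" using q(3,4) qq by auto
  ultimately have "-1/2 \<le> x" "x < 1/2" "-1/2 \<le> y" "y < 1/2" by auto
  then show False using q(1,2) qq unfolding SA_def OM_def by auto
qed

lemma Qm_cont1: "continuous_on UNIV (\<lambda>q. Qm h q)"
  unfolding Qm_eq by (intro continuous_intros)

lemma Qm_meas1[measurable]: "(\<lambda>q. Qm h q) \<in> borel_measurable borel"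
  by (rule borel_measurable_continuous_onI[OF Qm_cont1])

lemma Qm_meas2[measurable]: "(\<lambda>h. Qm h p) \<in> borel_measurable borel"
  by (intro borel_measurable_continuous_onI) (unfold Qm_eq, intro continuous_intros)

lemma Qm_periodic: "Qm h (x, y, t + 2 * pi) = (fst (Qm h (x, y, t)), fst (snd (Qm h (x, y, t))), snd (snd (Qm h (x, y, t))) + 2 * pi)"
  unfolding Qm_eq by simp

lemma rho_Qm_periodic:
  assumes "se2_fun rho"
  shows "se2_fun (\<lambda>q. rho (Qm h q) * cnj (phi k q))" and "se2_fun (\<lambda>q. norm (rho (Qm h q)))"
proof -
  have 1: "rho (Qm h (x, y, t + 2 * pi)) = rho (Qm h (x, y, t))" for x y t
    using assms unfolding se2_fun_def Qm_periodic by (cases "Qm h (x, y, t)") simp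
  show "se2_fun (\<lambda>q. rho (Qm h q) * cnj (phi k q))"
    unfolding se2_fun_def using 1 cnj_phi_periodic by simp
  show "se2_fun (\<lambda>q. norm (rho (Qm h q)))"
    unfolding se2_fun_def using 1 by simp
qed

lemma Rot_SA: "Rot s -` SA = SA"
  unfolding SA_def by (auto simp: Rot_def split: prod.splits)

lemma radial_Rot: "radial_transl rho \<Longrightarrow> rho (Rot s u) = rho u"
  unfolding radial_transl_def Rot_def by (cases u) simp

lemma inner_rho:
  fixes rho :: "se2 \<Rightarrow> complex"
  assumes rm[measurable]: "rho \<in> borel_measurable borel" and rp: "se2_fun rho" and rad: "radial_transl rho"
  shows "(LINT q:SA|lborel. rho (Qm h q) * cnj (phi k q)) = cnj (phi k h) * (LINT u:SA|lborel. rho u * cnj (phi k u))"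
proof -
  define g where "g = (\<lambda>q. rho (Qm h q) * cnj (phi k q))"
  define R where "R = (\<lambda>u. rho u * cnj (phi k u))"
  define s where "s = snd (snd h)"
  have gm: "g \<in> borel_measurable borel" unfolding g_def by measurable
  have Rm: "R \<in> borel_measurable borel" unfolding R_def by measurable
  have gp: "se2_fun g" unfolding g_def by (rule rho_Qm_periodic(1)[OF rp])
  have Rotm: "Rot s \<in> borel_measurable borel" using mp_Rot unfolding mp_def by simp
  have dR: "distr (muA SA) borel (Rot s) = muA SA" by (rule muA_mp[OF mp_Rot SA_borel Rot_SA])
  have e: "g (se2_mult h u) = cnj (phi k h) * R (Rot s u)" for u
    unfolding g_def R_def Qm_mult cnj_phi_mult s_def radial_Rot[OF rad] by simp
  have "(LINT q:SA|lborel. rho (Qm h q) * cnj (phi k q)) = integral\<^sup>L (muA SA) g"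
    unfolding g_def[symmetric] by (rule set_integral_muA(1)[OF SA_borel gm])
  also have "\<dots> = integral\<^sup>L (muA SA) (\<lambda>u. g (se2_mult h u))" by (rule left_inv(1)[OF gm gp, symmetric])
  also have "\<dots> = cnj (phi k h) * integral\<^sup>L (muA SA) (\<lambda>u. R (Rot s u))" unfolding e by simp
  also have "integral\<^sup>L (muA SA) (\<lambda>u. R (Rot s u)) = integral\<^sup>L (muA SA) R"
    by (rule integral_distr_muA(1)[OF dR Rotm Rm])
  also have "\<dots> = (LINT u:SA|lborel. rho u * cnj (phi k u))"
    unfolding R_def by (rule set_integral_muA(1)[OF SA_borel, symmetric]) measurable
  finally show ?thesis .
qed

lemma inner_norm:
  fixes rho :: "se2 \<Rightarrow> complex"
  assumes rm[measurable]: "rho \<in> borel_measurable borel" and rp: "se2_fun rho"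
  shows "(LINT q:SA|lborel. norm (rho (Qm h q))) = (LINT u:SA|lborel. norm (rho u))"
proof -
  define g where "g = (\<lambda>q. norm (rho (Qm h q)))"
  have gm: "g \<in> borel_measurable borel" unfolding g_def by measurable
  have gp: "se2_fun g" unfolding g_def by (rule rho_Qm_periodic(2)[OF rp])
  have "(LINT q:SA|lborel. norm (rho (Qm h q))) = integral\<^sup>L (muA SA) g"
    unfolding g_def[symmetric] by (rule set_integral_muA(1)[OF SA_borel gm])
  also have "\<dots> = integral\<^sup>L (muA SA) (\<lambda>u. g (se2_mult h u))" by (rule left_inv(1)[OF gm gp, symmetric])
  also have "\<dots> = integral\<^sup>L (muA SA) (\<lambda>u. norm (rho u))" unfolding g_def Qm_mult ..
  also have "\<dots> = (LINT u:SA|lborel. norm (rho u))"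
    by (rule set_integral_muA(1)[OF SA_borel, symmetric]) measurable
  finally show ?thesis .
qed

lemma inner_int:
  fixes rho :: "se2 \<Rightarrow> complex"
  assumes rm[measurable]: "rho \<in> borel_measurable borel" and rp: "se2_fun rho"
    and ri: "set_integrable lborel SA rho"
  shows "set_integrable lborel SA (\<lambda>q. rho (Qm h q) * cnj (phi k q))"
proof -
  define g where "g = (\<lambda>q. rho (Qm h q) * cnj (phi k q))"
  have gm: "g \<in> borel_measurable borel" unfolding g_def by measurable
  have gp: "se2_fun g" unfolding g_def by (rule rho_Qm_periodic(1)[OF rp])
  have ri': "integrable (muA SA) rho" using set_integral_muA(2)[OF SA_borel rm] ri by simp
  have "integrable (muA SA) (\<lambda>u. g (se2_mult h u))"
  proof (rule Bochner_Integration.integrable_bound[OF ri'])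
    have "(\<lambda>u. g (se2_mult h u)) \<in> borel_measurable borel"
    proof -
      have "(\<lambda>u. se2_mult h u) = (\<lambda>u. u + h) \<circ> Rot (snd (snd h))"
        unfolding se2_mult_def Rot_def by (cases h) (auto simp: fun_eq_iff add.commute)
      then have "(\<lambda>u. se2_mult h u) \<in> borel_measurable borel"
        using mp_comp[OF mp_Rot mp_trans] unfolding mp_def by metis
      then show ?thesis using gm by (simp add: measurable_comp[unfolded comp_def])
    qed
    then show "(\<lambda>u. g (se2_mult h u)) \<in> borel_measurable (muA SA)" by simp
    show "AE x in muA SA. norm (g (se2_mult h x)) \<le> norm (rho x)"
      unfolding g_def Qm_mult by (simp add: norm_mult)
  qed
  then have "integrable (muA SA) g" using left_inv(2)[OF gm gp] by simp
  then show ?thesis unfolding g_def[symmetric] using set_integral_muA(2)[OF SA_borel gm] by simp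
qed

lemma fst_se2_meas[measurable]: "(fst :: se2 \<times> se2 \<Rightarrow> se2) \<in> borel_measurable borel"
  by (intro borel_measurable_continuous_onI continuous_intros)
lemma snd_se2_meas[measurable]: "(snd :: se2 \<times> se2 \<Rightarrow> se2) \<in> borel_measurable borel"
  by (intro borel_measurable_continuous_onI continuous_intros)

lemma measurable_lborel2_se2: "measurable (lborel \<Otimes>\<^sub>M lborel :: (se2 \<times> se2) measure) N = measurable borel N"
  unfolding lborel_prod by (rule measurable_cong_sets) auto

lemma fubini_step:
  fixes f rho :: "se2 \<Rightarrow> complex"
  assumes fm[measurable]: "f \<in> borel_measurable borel" and rm[measurable]: "rho \<in> borel_measurable borel"
    and fi: "set_integrable lborel SA f" and ri: "set_integrable lborel SA rho"
    and rp: "se2_fun rho" and rad: "radial_transl rho"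
  shows "(LINT q:SA|lborel. (LINT h:SA|lborel. f h * rho (Qm h q)) * cnj (phi k q))
       = (LINT h:SA|lborel. f h * cnj (phi k h)) * (LINT u:SA|lborel. rho u * cnj (phi k u))"
proof -
  define F where "F = (\<lambda>h q. indicator SA h *\<^sub>R (indicator SA q *\<^sub>R (f h * (rho (Qm h q) * cnj (phi k q)))))"
  define Ir where "Ir = (LINT u:SA|lborel. rho u * cnj (phi k u))"
  define Nr where "Nr = (LINT u:SA|lborel. norm (rho u))"
  have Qmm[measurable]: "(\<lambda>z::se2\<times>se2. Qm (fst z) (snd z)) \<in> borel_measurable borel" by (rule Qm_measurable)
  have Fm: "(\<lambda>z. F (fst z) (snd z)) \<in> borel_measurable (borel :: (se2 \<times> se2) measure)"
    unfolding F_def by measurable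
  have Fm': "case_prod F \<in> borel_measurable (lborel \<Otimes>\<^sub>M lborel)"
    unfolding measurable_lborel2_se2 using Fm by (simp add: case_prod_beta')
  have int: "integrable (lborel \<Otimes>\<^sub>M lborel) (case_prod F)"
  proof (rule lborel_pair.Fubini_integrable)
    show "case_prod F \<in> borel_measurable (lborel \<Otimes>\<^sub>M lborel)" by (rule Fm')
    have nrm: "(\<integral>q. norm (case_prod F (h, q)) \<partial>lborel) = indicator SA h * norm (f h) * Nr" for h
    proof -
      have "(\<integral>q. norm (case_prod F (h, q)) \<partial>lborel) = (\<integral>q. (indicator SA h * norm (f h)) * (indicator SA q * norm (rho (Qm h q))) \<partial>lborel)"
        unfolding F_def by (intro Bochner_Integration.integral_cong) (auto simp: norm_mult split: split_indicator)
      also have "\<dots> = (indicator SA h * norm (f h)) * (\<integral>q. indicator SA q * norm (rho (Qm h q)) \<partial>lborel)"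
        by simp
      also have "(\<integral>q. indicator SA q * norm (rho (Qm h q)) \<partial>lborel) = Nr"
        using inner_norm[OF rm rp, of h] unfolding Nr_def set_lebesgue_integral_def by simp
      finally show ?thesis .
    qed
    have "integrable lborel (\<lambda>h. indicator SA h *\<^sub>R f h)" using fi unfolding set_integrable_def .
    then have "integrable lborel (\<lambda>h. norm (indicator SA h *\<^sub>R f h) * Nr)" by (intro integrable_mult_left integrable_norm)
    moreover have "norm (indicator SA h *\<^sub>R f h) * Nr = indicator SA h * norm (f h) * Nr" for h
      by (simp split: split_indicator)
    ultimately show "integrable lborel (\<lambda>h. \<integral>q. norm (case_prod F (h, q)) \<partial>lborel)"
      unfolding nrm by simp
    show "AE h in lborel. integrable lborel (\<lambda>q. case_prod F (h, q))"
    proof (rule AE_I2)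
      fix h :: se2
      show "integrable lborel (\<lambda>q. case_prod F (h, q))"
      proof (cases "h \<in> SA")
        case True
        have "integrable lborel (\<lambda>q. indicator SA q *\<^sub>R (rho (Qm h q) * cnj (phi k q)))"
          using inner_int[OF rm rp ri, of h k] unfolding set_integrable_def .
        then have "integrable lborel (\<lambda>q. f h * (indicator SA q *\<^sub>R (rho (Qm h q) * cnj (phi k q))))"
          by (rule integrable_mult_right)
        moreover have "f h * (indicator SA q *\<^sub>R (rho (Qm h q) * cnj (phi k q))) = case_prod F (h, q)" for q
          unfolding F_def using True by (simp split: split_indicator)
        ultimately show ?thesis by simp
      next
        case False
        then show ?thesis unfolding F_def by simp
      qed
    qed
  qed
  have "(LINT q:SA|lborel. (LINT h:SA|lborel. f h * rho (Qm h q)) * cnj (phi k q)) = (\<integral>q. \<integral>h. F h q \<partial>lborel \<partial>lborel)"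
    unfolding set_lebesgue_integral_def
  proof (intro Bochner_Integration.integral_cong refl)
    fix q :: se2
    have "indicator SA q *\<^sub>R ((\<integral>h. indicator SA h *\<^sub>R (f h * rho (Qm h q)) \<partial>lborel) * cnj (phi k q))
        = indicator SA q *\<^sub>R (\<integral>h. indicator SA h *\<^sub>R (f h * rho (Qm h q)) * cnj (phi k q) \<partial>lborel)"
      by (simp only: integral_mult_left_zero)
    also have "\<dots> = (\<integral>h. indicator SA q *\<^sub>R (indicator SA h *\<^sub>R (f h * rho (Qm h q)) * cnj (phi k q)) \<partial>lborel)"
      by (rule integral_scaleR_right[symmetric])
    also have "\<dots> = (\<integral>h. F h q \<partial>lborel)"
      unfolding F_def by (intro Bochner_Integration.integral_cong) (auto split: split_indicator)
    finally show "indicator SA q *\<^sub>R ((\<integral>h. indicator SA h *\<^sub>R (f h * rho (Qm h q)) \<partial>lborel) * cnj (phi k q)) = (\<integral>h. F h q \<partial>lborel)" .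
  qed
  also have "\<dots> = (\<integral>h. \<integral>q. F h q \<partial>lborel \<partial>lborel)"
    by (rule lborel_pair.Fubini_integral[OF int])
  also have "\<dots> = (\<integral>h. indicator SA h *\<^sub>R (f h * cnj (phi k h)) * Ir \<partial>lborel)"
  proof (intro Bochner_Integration.integral_cong refl)
    fix h :: se2
    have "(\<integral>q. F h q \<partial>lborel) = indicator SA h *\<^sub>R (\<integral>q. indicator SA q *\<^sub>R (f h * (rho (Qm h q) * cnj (phi k q))) \<partial>lborel)"
      unfolding F_def by (rule integral_scaleR_right)
    also have "(\<integral>q. indicator SA q *\<^sub>R (f h * (rho (Qm h q) * cnj (phi k q))) \<partial>lborel) = (\<integral>q. f h * (indicator SA q *\<^sub>R (rho (Qm h q) * cnj (phi k q))) \<partial>lborel)"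
      by (simp only: mult_scaleR_right)
    also have "\<dots> = f h * (\<integral>q. indicator SA q *\<^sub>R (rho (Qm h q) * cnj (phi k q)) \<partial>lborel)"
      by (rule integral_mult_right_zero)
    also have "(\<integral>q. indicator SA q *\<^sub>R (rho (Qm h q) * cnj (phi k q)) \<partial>lborel) = cnj (phi k h) * Ir"
      using inner_rho[OF rm rp rad, of h k] unfolding Ir_def set_lebesgue_integral_def .
    finally show "(\<integral>q. F h q \<partial>lborel) = indicator SA h *\<^sub>R (f h * cnj (phi k h)) * Ir"
      by (simp add: algebra_simps)
  qed
  also have "\<dots> = (LINT h:SA|lborel. f h * cnj (phi k h)) * Ir"
    unfolding set_lebesgue_integral_def by (rule integral_mult_left_zero)
  finally show ?thesis unfolding Ir_def .
qed

lemma Qm_swap_measurable[measurable]: "(\<lambda>z::se2\<times>se2. Qm (snd z) (fst z)) \<in> borel_measurable borel"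
  by (intro borel_measurable_continuous_onI) (unfold Qm_eq, intro continuous_intros)

lemma G_measurable:
  fixes f rho :: "se2 \<Rightarrow> complex"
  assumes fm[measurable]: "f \<in> borel_measurable borel" and rm[measurable]: "rho \<in> borel_measurable borel"
  shows "(\<lambda>q. LINT h:SA|lborel. f h * rho (Qm h q)) \<in> borel_measurable borel"
proof -
  have "(\<lambda>z::se2\<times>se2. indicator SA (snd z) *\<^sub>R (f (snd z) * rho (Qm (snd z) (fst z)))) \<in> borel_measurable borel"
    by measurable
  then have "case_prod (\<lambda>q h. indicator SA h *\<^sub>R (f h * rho (Qm h q))) \<in> borel_measurable (lborel \<Otimes>\<^sub>M lborel)"
    unfolding measurable_lborel2_se2 by (simp add: case_prod_beta')
  then have "(\<lambda>q. \<integral>h. indicator SA h *\<^sub>R (f h * rho (Qm h q)) \<partial>lborel) \<in> borel_measurable lborel"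
    by (rule lborel.borel_measurable_lebesgue_integral)
  then show ?thesis unfolding set_lebesgue_integral_def by simp
qed

lemma conv_eq:
  fixes f rho :: "se2 \<Rightarrow> complex"
  assumes fm[measurable]: "f \<in> borel_measurable borel" and rm[measurable]: "rho \<in> borel_measurable borel"
    and fs: "supported_in_disk (1/4) f" and rs: "supported_in_disk (1/4) rho"
  shows "(LINT h:SA|lborel. f (cen h) * rho (Qm h p)) = (LINT h:SA|lborel. f h * rho (Qm h (cen p)))"
proof -
  obtain x y t where p: "p = (x, y, t)" by (cases p)
  define l :: se2 where "l = (of_int (floor (x + 1/2)), of_int (floor (y + 1/2)), 0)"
  define g where "g = (\<lambda>h. f (cen h) * rho (Qm h p))"
  have gm: "g \<in> borel_measurable borel" unfolding g_def by measurable
  have Tm: "(\<lambda>u::se2. u + l) \<in> borel_measurable borel" using mp_trans unfolding mp_def by blast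
  have TA: "(\<lambda>u::se2. u + l) -` SA = SA" unfolding SA_def l_def by (auto simp: split: prod.splits)
  have dT: "distr (muA SA) borel (\<lambda>u. u + l) = muA SA" by (rule muA_mp[OF mp_trans SA_borel TA])
  have gl: "g (h + l) = f (cen h) * rho (Qm h (cen p))" for h
  proof -
    have "cen (h + l) = cen h" unfolding cen_def l_def using cen1_int by (cases h) simp
    moreover have "Qm (h + l) p = Qm h (cen p)"
      unfolding Qm_eq cen_def cen1_def l_def p by (cases h) (simp add: algebra_simps)
    ultimately show ?thesis unfolding g_def by simp
  qed
  have "(LINT h:SA|lborel. f (cen h) * rho (Qm h p)) = integral\<^sup>L (muA SA) g"
    unfolding g_def by (rule set_integral_muA(1)) measurable
  also have "\<dots> = integral\<^sup>L (muA SA) (\<lambda>h. g (h + l))" by (rule integral_distr_muA(1)[OF dT Tm gm, symmetric])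
  also have "\<dots> = integral\<^sup>L (muA SA) (\<lambda>h. f (cen h) * rho (Qm h (cen p)))" unfolding gl ..
  also have "\<dots> = integral\<^sup>L (muA SA) (\<lambda>h. f h * rho (Qm h (cen p)))"
  proof (rule integral_cong_AE)
    show "(\<lambda>h. f (cen h) * rho (Qm h (cen p))) \<in> borel_measurable (muA SA)" by simp
    show "(\<lambda>h. f h * rho (Qm h (cen p))) \<in> borel_measurable (muA SA)" by simp
    show "AE h in muA SA. f (cen h) * rho (Qm h (cen p)) = f h * rho (Qm h (cen p))"
      using AE_coords_muA[OF SA_borel, of "-3/4" "-3/4"]
    proof eventually_elim
      case (elim h)
      show ?case
        by (rule cen_bad[OF fs rs]) (use elim cen1_range in \<open>auto simp: cen_def\<close>)
    qed
  qed
  also have "\<dots> = (LINT h:SA|lborel. f h * rho (Qm h (cen p)))"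
    by (rule set_integral_muA(1)[symmetric]) measurable
  finally show ?thesis .
qed

lemma supp_OM_SA:
  assumes fs: "supported_in_disk (1/4) f"
  shows "indicator OM q *\<^sub>R (f q * z) = indicator SA q *\<^sub>R (f q * z)"
proof (cases "f q = 0")
  case False
  obtain x y t where q: "q = (x, y, t)" by (cases q)
  have "\<bar>x\<bar> \<le> 1/4" "\<bar>y\<bar> \<le> 1/4" using supp_coord[OF fs] False q by auto
  then have "q \<in> OM \<longleftrightarrow> q \<in> SA" unfolding OM_def SA_def q by (auto simp: abs_le_iff)
  then show ?thesis by (simp split: split_indicator)
qed simp

theorem mainTheorem6:
  fixes f rho :: "se2 \<Rightarrow> complex" and k :: "int \<times> int \<times> int"
  assumes "se2_L1 f" and "se2_L1 rho"
    and "supported_in_disk (1/4) f" and "supported_in_disk (1/4) rho"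
    and "radial_transl rho"
  shows "fourierX (convX (periodize f) rho) k = fourierX (periodize f) k * fourierOmega rho k"
proof -
  note fL = assms(1) and rL = assms(2) and fs = assms(3) and rs = assms(4) and rad = assms(5)
  have fm[measurable]: "f \<in> borel_measurable borel" by (rule se2_L1_measurable[OF fL])
  have rm[measurable]: "rho \<in> borel_measurable borel" by (rule se2_L1_measurable[OF rL])
  have fi: "set_integrable lborel SA f" and ri: "set_integrable lborel SA rho" and rp: "se2_fun rho"
    using fL rL unfolding se2_L1_def SA_def by auto
  define c where "c = complex_of_real (1 / (2 * pi))"
  define G where "G = (\<lambda>q. LINT h:SA|lborel. f h * rho (Qm h q))"
  have Gm[measurable]: "G \<in> borel_measurable borel" unfolding G_def by (rule G_measurable[OF fm rm])
  define J where "J = (LINT h:SA|lborel. f h * cnj (phi k h))"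
  define Ir where "Ir = (LINT u:SA|lborel. rho u * cnj (phi k u))"
  have psi: "periodize f = (\<lambda>p. f (cen p))" using periodize_cen[OF fs] by (rule ext)
  have conv: "convX (periodize f) rho p = c * G (cen p)" for p
  proof -
    have "convX (periodize f) rho p = c * (LINT h:SA|lborel. f (cen h) * rho (Qm h p))"
      unfolding convX_def se2_integral_def psi c_def SA_def Qm_def ..
    also have "(LINT h:SA|lborel. f (cen h) * rho (Qm h p)) = G (cen p)"
      unfolding G_def by (rule conv_eq[OF fm rm fs rs])
    finally show ?thesis .
  qed
  define H where "H = (\<lambda>q. c * G q * cnj (phi k q))"
  have Hm[measurable]: "H \<in> borel_measurable borel" unfolding H_def by measurable
  have "fourierX (convX (periodize f) rho) k = c * (LINT p:FF|lborel. H (cen p))"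
    unfolding fourierX_def c_def[symmetric] FF_def[symmetric] conv H_def cnj_phi_cen ..
  also have "(LINT p:FF|lborel. H (cen p)) = integral\<^sup>L (muA FF) (\<lambda>p. H (cen p))"
    by (rule set_integral_muA(1)) measurable
  also have "\<dots> = integral\<^sup>L (muA OM) H" by (rule unfold_cen[OF Hm])
  also have "\<dots> = (LINT q:OM|lborel. H q)" by (rule set_integral_muA(1)[symmetric]) measurable
  also have "\<dots> = (LINT q:SA|lborel. H q)"
    unfolding set_lebesgue_integral_def
  proof (rule integral_cong_AE)
    show "(\<lambda>q. indicator OM q *\<^sub>R H q) \<in> borel_measurable lborel" by measurable
    show "(\<lambda>q. indicator SA q *\<^sub>R H q) \<in> borel_measurable lborel" by measurable
    show "AE q in lborel. indicator OM q *\<^sub>R H q = indicator SA q *\<^sub>R H q"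
      using AE_coords_lborel[of "1/2" "1/2"]
    proof eventually_elim
      case (elim q)
      show ?case
      proof (cases "q \<in> OM")
        case True
        then have "q \<in> SA" unfolding OM_def SA_def by auto
        then show ?thesis using True by simp
      next
        case nOM: False
        show ?thesis
        proof (cases "q \<in> SA")
          case True
          have z: "f h * rho (Qm h q) = 0" for h
            using conv_supp[OF fs rs True nOM] elim by auto
          have "G q = 0" unfolding G_def set_lebesgue_integral_def z by simp
          then have "H q = 0" unfolding H_def by simp
          then show ?thesis by simp
        next
          case False
          then show ?thesis using nOM by simp
        qed
      qed
    qed
  qed
  also have "(LINT q:SA|lborel. H q) = c * (LINT q:SA|lborel. G q * cnj (phi k q))"
    unfolding H_def set_lebesgue_integral_def
    by (simp only: mult.assoc mult_scaleR_right[symmetric] integral_mult_right_zero)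
  also have "(LINT q:SA|lborel. G q * cnj (phi k q)) = J * Ir"
    unfolding G_def J_def Ir_def by (rule fubini_step[OF fm rm fi ri rp rad])
  finally have LHS: "fourierX (convX (periodize f) rho) k = c * (c * (J * Ir))" .
  have "fourierX (periodize f) k = c * (LINT p:FF|lborel. f (cen p) * cnj (phi k (cen p)))"
    unfolding fourierX_def c_def[symmetric] FF_def[symmetric] psi cnj_phi_cen ..
  also have "(LINT p:FF|lborel. f (cen p) * cnj (phi k (cen p))) = integral\<^sup>L (muA FF) (\<lambda>p. f (cen p) * cnj (phi k (cen p)))"
    by (rule set_integral_muA(1)) measurable
  also have "\<dots> = integral\<^sup>L (muA OM) (\<lambda>q. f q * cnj (phi k q))" by (rule unfold_cen) measurable
  also have "\<dots> = (LINT q:OM|lborel. f q * cnj (phi k q))" by (rule set_integral_muA(1)[symmetric]) measurable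
  also have "\<dots> = J"
    unfolding J_def set_lebesgue_integral_def by (simp only: supp_OM_SA[OF fs])
  finally have R1: "fourierX (periodize f) k = c * J" .
  have "fourierOmega rho k = c * (LINT q:OM|lborel. rho q * cnj (phi k q))"
    unfolding fourierOmega_def c_def[symmetric] OM_def[symmetric] ..
  also have "(LINT q:OM|lborel. rho q * cnj (phi k q)) = Ir"
    unfolding Ir_def set_lebesgue_integral_def by (simp only: supp_OM_SA[OF rs])
  finally have R2: "fourierOmega rho k = c * Ir" .
  show ?thesis unfolding LHS R1 R2 by (simp add: algebra_simps)
qed

end
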